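(* Let $i\ge 3$ and $k\ge 3$ be integers. Then: (a) $g_3(L_i,L_{i+2},L_{i+k})=(4L_i-1)L_{i+2}-L_i$ whenever $k\ge i+5$; (b) $g_3(L_i,L_{i+2},L_{2i+4})=(4F_{i-1}-F_{i-2}-1)L_{i+2}+L_{2i+4}-L_i$; (c) $g_3(L_i,L_{i+2},L_{2i+3})=(4F_{i+1}-1)L_{i+2}-L_i$; (d) $g_3(L_i,L_{i+2},L_{2i+2})=(F_i+2F_{i-3}-1)L_{i+2}+2L_{2i+2}-L_i$; (e) $g_3(L_i,L_{i+2},L_{2i+1})=(F_{i-1}-1)L_{i+2}+3L_{2i+1}-L_i$; (f) $g_3(L_i,L_{i+2},L_{2i})=(2F_{i-3}-1)L_{i+2}+4L_{2i}-L_i$ for $i\ge 4$, and $g_3(L_3,L_5,L_6)=3L_5+2L_6-L_3=69$; (g) if $r=\lfloor (L_i-1)/F_k\rfloor\ge 3$ (equivalently $k\le i-1$), then $$g_3(L_i,L_{i+2},L_{i+k})=\begin{cases}(L_i-rF_k-1)L_{i+2}+(r+3)L_{i+k}-L_i & \text{if } (L_i-rF_k)L_{i+2}\ge F_{k-2}L_i,\\ (F_k-1)L_{i+2}+(r+2)L_{i+k}-L_i & \text{if } (L_i-rF_k)L_{i+2}< F_{k-2}L_i.\end{cases}$$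
   Context: Fibonacci numbers: $F_0=0$, $F_1=1$, $F_n=F_{n-1}+F_{n-2}$. Lucas numbers: $L_0=2$, $L_1=1$, $L_n=L_{n-1}+L_{n-2}$. For positive integers $a_1,\dots,a_l$ with $\gcd(a_1,\dots,a_l)=1$ and an integer $n$, let $d(n;a_1,\dots,a_l)$ be the number of tuples $(x_1,\dots,x_l)$ of nonnegative integers with $a_1x_1+\dots+a_lx_l=n$. For a nonnegative integer $p$, the $p$-Frobenius number $g_p(a_1,\dots,a_l)$ is the largest integer $n$ with $d(n;a_1,\dots,a_l)\le p$. *)

theory Defs
  imports Main "HOL-Number_Theory.Fib"
begin

fun lucas :: "nat \<Rightarrow> nat" where
  "lucas 0 = 2"
| "lucas (Suc 0) = 1"
| "lucas (Suc (Suc n)) = lucas (Suc n) + lucas n"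

definition num_reps :: "int \<Rightarrow> nat list \<Rightarrow> nat" where
  "num_reps n as = card {xs :: nat list. length xs = length as \<and>
      int (\<Sum>j<length as. as ! j * xs ! j) = n}"

definition p_frobenius :: "nat \<Rightarrow> nat list \<Rightarrow> int" where
  "p_frobenius p as = (GREATEST n :: int. num_reps n as \<le> p)"

end

theory Submission
  imports Defs
begin


lemma lucas_fib: "int (lucas (Suc n)) = int (fib n) + int (fib (Suc (Suc n)))"
proof (induction n rule: fib.induct)
  case 1 then show ?case by simp
next
  case 2 then show ?case by (simp add: numeral_2_eq_2)
next
  case (3 n) then show ?case by simp
qed

lemma lucas_add: "int (lucas (i + Suc (Suc k))) = int (fib (Suc (Suc k))) * int (lucas (i+2)) - int (fib k) * int (lucas i)"
proof (induction k rule: fib.induct)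
  case 1 then show ?case by (simp add: numeral_2_eq_2)
next
  case 2 then show ?case by (simp add: numeral_2_eq_2 eval_nat_numeral)
next
  case (3 n)
  have e: "i + Suc (Suc (Suc (Suc n))) = Suc (Suc (i + Suc (Suc n)))" by simp
  have e2: "i + Suc (Suc (Suc n)) = Suc (i + Suc (Suc n))" by simp
  show ?case using 3 unfolding e by (simp only: lucas.simps fib.simps of_nat_add e2[symmetric]) (simp add: algebra_simps)
qed

lemma lucas_coprime_Suc: "coprime (lucas n) (lucas (Suc n))"
proof (induction n rule: nat_less_induct)
  case (1 n)
  show ?case
  proof (cases n)
    case 0 then show ?thesis by simp
  next
    case (Suc p)
    then have "coprime (lucas p) (lucas (Suc p))" using 1 by simp
    then show ?thesis using Suc by (simp add: coprime_iff_gcd_eq_1 gcd.commute[of "lucas (Suc p)"])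
  qed
qed

lemma lucas_coprime2: "coprime (lucas i) (lucas (i+2))"
proof -
  have "coprime (lucas i) (lucas (Suc i))" by (rule lucas_coprime_Suc)
  then have "gcd (lucas i) (lucas i + lucas (Suc i)) = 1" by (simp only: gcd_add2 coprime_iff_gcd_eq_1)
  then show ?thesis by (simp add: numeral_2_eq_2 coprime_iff_gcd_eq_1 add.commute)
qed




definition PS :: "int \<Rightarrow> int \<Rightarrow> int \<Rightarrow> int \<Rightarrow> int \<Rightarrow> int \<Rightarrow> (nat \<times> nat) set" where
 "PS a b m t s e = {p. m * int (snd p) \<le> s + int (fst p) * a \<and> int (fst p) * b - t * int (snd p) \<le> e}"

lemma PS_mem[simp]: "(j,z) \<in> PS a b m t s e \<longleftrightarrow> m * int z \<le> s + int j * a \<and> int j * b - t * int z \<le> e"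
  by (simp add: PS_def)

lemma genbound:
  fixes a b m t s :: int
  assumes "t \<ge> 0" "m * z \<le> s + j * a"
  shows "m * (j * b - t * z) \<ge> j * (m * b - t * a) - t * s"
proof -
  have "t * (m * z) \<le> t * (s + j * a)" using assms by (simp add: mult_left_mono)
  then show ?thesis by (simp add: algebra_simps)
qed

lemma PS_finite:
  fixes a b m t s e :: int
  assumes "m > 0" "t \<ge> 0" "a > 0" "m * b - t * a > 0" "s \<ge> 0"
  shows "finite (PS a b m t s e)"
proof -
  define N where "N = nat (m * e + t * s)"
  define N' where "N' = nat (s + int N * a)"
  have "PS a b m t s e \<subseteq> {..N} \<times> {..N'}"
  proof
    fix p assume p: "p \<in> PS a b m t s e"
    obtain j z where pj: "p = (j,z)" by (cases p)
    have adm: "m * int z \<le> s + int j * a" and v: "int j * b - t * int z \<le> e" using p pj by auto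
    have g: "m * (int j * b - t * int z) \<ge> int j * (m * b - t * a) - t * s"
      using genbound[OF assms(2) adm] .
    have "m * (int j * b - t * int z) \<le> m * e" using v assms(1) by (simp add: mult_left_mono)
    moreover have "int j \<le> int j * (m * b - t * a)" using assms(4) by (simp add: mult_le_cancel_left1)
    ultimately have jN: "int j \<le> m * e + t * s" using g by linarith
    then have "j \<le> N" unfolding N_def by linarith
    have "int z \<le> m * int z" using assms(1) by (simp add: mult_le_cancel_right1)
    moreover have "int j * a \<le> int N * a" using \<open>j \<le> N\<close> assms(3) by (simp add: mult_right_mono)
    ultimately have "z \<le> N'" using adm unfolding N'_def by linarith
    then show "p \<in> {..N} \<times> {..N'}" using pj \<open>j \<le> N\<close> by simp
  qed
  then show ?thesis by (rule finite_subset) simp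
qed

lemma len3: "length xs = 3 \<Longrightarrow> \<exists>x y z. xs = [x,y,z]"
  by (auto simp: numeral_3_eq_3 length_Suc_conv)

lemma reduction:
  fixes aN bN cN :: nat and a b m t s e n :: int
  assumes aN: "a = int aN" and bN: "b = int bN" and cN: "int cN = m * b - t * a"
    and apos: "a > 0" and mpos: "m > 0" and cop: "coprime a b" and s0: "0 \<le> s" and sa: "s < a" and n: "n = b * s + a * e"
  shows "num_reps n [aN,bN,cN] = card (PS a b m t s e)"
proof -
  define f where "f = (\<lambda>p::nat\<times>nat. [nat (e - int (fst p) * b + t * int (snd p)), nat (s + int (fst p) * a - m * int (snd p)), snd p])"
  define S where "S = {xs :: nat list. length xs = length [aN,bN,cN] \<and>
      int (\<Sum>j<length [aN,bN,cN]. [aN,bN,cN] ! j * xs ! j) = n}"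
  have sum3: "(\<Sum>j<3. [aN,bN,cN] ! j * xs ! j) = aN * xs!0 + bN * xs!1 + cN * xs!2" for xs :: "nat list"
    by (simp add: numeral_3_eq_3 numeral_2_eq_2 lessThan_Suc)
  have S_eq: "S = {xs. length xs = 3 \<and> a * int (xs!0) + b * int (xs!1) + (m*b - t*a) * int (xs!2) = n}"
    unfolding S_def using aN bN cN by (simp add: sum3 numeral_3_eq_3 numeral_2_eq_2 flip: cN)
  have inj: "inj_on f (PS a b m t s e)"
  proof (rule inj_onI)
    fix p q assume p: "p \<in> PS a b m t s e" and q: "q \<in> PS a b m t s e" and fe: "f p = f q"
    obtain j z where pj: "p = (j,z)" by (cases p)
    obtain j' z' where qj: "q = (j',z')" by (cases q)
    have zz: "z = z'" using fe pj qj by (simp add: f_def)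
    have n1: "nat (s + int j * a - m * int z) = nat (s + int j' * a - m * int z')"
      using fe pj qj unfolding f_def by auto
    have "s + int j * a - m * int z = s + int j' * a - m * int z'"
      using eq_nat_nat_iff[THEN iffD1, OF _ _ n1] p q pj qj by simp
    then have "int j * a = int j' * a" using zz by simp
    then have "j = j'" using apos by simp
    then show "p = q" using pj qj zz by simp
  qed
  have img: "f ` PS a b m t s e = S"
  proof
    show "f ` PS a b m t s e \<subseteq> S"
    proof
      fix xs assume "xs \<in> f ` PS a b m t s e"
      then obtain j z where p: "(j,z) \<in> PS a b m t s e" and xs: "xs = f (j,z)" by auto
      have adm: "m * int z \<le> s + int j * a" and v: "int j * b - t * int z \<le> e" using p by auto
      have "a * (e - int j * b + t * int z) + b * (s + int j * a - m * int z) + (m*b - t*a) * int z = n"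
        using n by (simp add: algebra_simps)
      then show "xs \<in> S" unfolding S_eq using xs adm v by (simp add: f_def)
    qed
  next
    show "S \<subseteq> f ` PS a b m t s e"
    proof
      fix xs assume xs: "xs \<in> S"
      then obtain x y z where xyz: "xs = [x,y,z]" using len3 unfolding S_eq by blast
      have eq: "a * int x + b * int y + (m*b - t*a) * int z = b * s + a * e" using xs xyz n unfolding S_eq by simp
      define u where "u = int y + m * int z"
      have "b * (u - s) = a * (e - int x + t * int z)" using eq unfolding u_def by (simp add: algebra_simps)
      then have "a dvd b * (u - s)" by simp
      then have "a dvd (u - s)" using cop by (simp add: coprime_dvd_mult_right_iff)
      then obtain jj where jj: "u - s = a * jj" by (auto elim: dvdE)
      have "b * (a * jj) = a * (e - int x + t * int z)" using \<open>b * (u - s) = _\<close> jj by simp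
      then have "a * (b * jj) = a * (e - int x + t * int z)" by (simp add: algebra_simps)
      then have bj: "b * jj = e - int x + t * int z" using apos by simp
      have u0: "u \<ge> 0" unfolding u_def using mpos by simp
      have "jj \<ge> 0"
      proof (rule ccontr)
        assume "\<not> jj \<ge> 0"
        then have "jj \<le> -1" by simp
        then have "a * jj \<le> a * (-1)" using apos by (intro mult_left_mono) auto
        then show False using jj u0 sa by linarith
      qed
      define j where "j = nat jj"
      have jjj: "jj = int j" using \<open>jj \<ge> 0\<close> unfolding j_def by simp
      have "(j,z) \<in> PS a b m t s e"
        using jj bj jjj unfolding u_def by (simp add: algebra_simps)
      moreover have "f (j,z) = xs"
      proof -
        have h1: "e - int j * b + t * int z = int x" using bj jjj by (simp add: algebra_simps)
        have h2: "s + int j * a - m * int z = int y" using jj jjj unfolding u_def by (simp add: algebra_simps)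
        show ?thesis unfolding f_def xyz using h1 h2 by simp
      qed
      ultimately show "xs \<in> f ` PS a b m t s e" by (metis image_eqI)
    qed
  qed
  have "num_reps n [aN,bN,cN] = card S" unfolding num_reps_def S_def by simp
  also have "\<dots> = card (PS a b m t s e)" using card_image[OF inj] img by simp
  finally show ?thesis .
qed




definition Low :: "int \<Rightarrow> int \<Rightarrow> int \<Rightarrow> int \<Rightarrow> int \<Rightarrow> bool" where
 "Low a b m t G \<longleftrightarrow> (\<forall>s. 0 \<le> s \<and> s < a \<longrightarrow> (\<exists>p1 p2 p3 p4 v. distinct [p1,p2,p3,p4] \<and>
     p1 \<in> PS a b m t s v \<and> p2 \<in> PS a b m t s v \<and> p3 \<in> PS a b m t s v \<and> p4 \<in> PS a b m t s v
     \<and> b*s + a*v \<le> G + a))"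

definition Up :: "int \<Rightarrow> int \<Rightarrow> int \<Rightarrow> int \<Rightarrow> int \<Rightarrow> bool" where
 "Up a b m t G \<longleftrightarrow> (\<exists>s0 e0 p1 p2 p3. 0 \<le> s0 \<and> s0 < a \<and> G = b*s0 + a*e0 \<and> PS a b m t s0 e0 \<subseteq> {p1,p2,p3})"

lemma PS_mono: "e \<le> e' \<Longrightarrow> PS a b m t s e \<subseteq> PS a b m t s e'"
  unfolding PS_def by auto

lemma decomp:
  fixes a b n :: int
  assumes "a > 0" "coprime a b"
  shows "\<exists>s e. 0 \<le> s \<and> s < a \<and> n = b * s + a * e"
proof -
  obtain u v where uv: "u * a + v * b = gcd a b" using bezout_int by blast
  then have uv1: "u * a + v * b = 1" using assms(2) by (simp add: coprime_iff_gcd_eq_1)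
  define s where "s = (n * v) mod a"
  have "a dvd (n - b * s)"
  proof -
    have "n * v = a * (n * v div a) + s" unfolding s_def by simp
    then have "n - b * s = n * (u * a + v * b) - b * (n * v - a * (n * v div a))" using uv1 by simp
    also have "\<dots> = a * (n * u + b * (n * v div a))" by (simp add: algebra_simps)
    finally show ?thesis by simp
  qed
  then obtain e where "n - b * s = a * e" by (auto elim: dvdE)
  moreover have "0 \<le> s" "s < a" unfolding s_def using assms(1) by auto
  ultimately show ?thesis by (intro exI[of _ s] exI[of _ e]) auto
qed

lemma card3: "card {p1,p2,p3} \<le> 3"
  by (simp add: card_insert_if)

theorem frob:
  fixes aN bN cN :: nat and a b m t G :: int
  assumes aN: "a = int aN" and bN: "b = int bN" and cN: "int cN = m * b - t * a"
    and apos: "a > 0" and mpos: "m > 0" and t0: "t \<ge> 0" and cpos: "m * b - t * a > 0"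
    and cop: "coprime a b" and low: "Low a b m t G" and up: "Up a b m t G"
  shows "p_frobenius 3 [aN,bN,cN] = G"
  unfolding p_frobenius_def
proof (rule Greatest_equality)
  obtain s0 e0 p1 p2 p3 where s0: "0 \<le> s0" "s0 < a" "G = b*s0 + a*e0" "PS a b m t s0 e0 \<subseteq> {p1,p2,p3}"
    using up unfolding Up_def by blast
  have "num_reps G [aN,bN,cN] = card (PS a b m t s0 e0)"
    using reduction[OF aN bN cN apos mpos cop s0(1) s0(2) s0(3)] .
  also have "\<dots> \<le> card {p1,p2,p3}" using s0(4) by (intro card_mono) auto
  also have "\<dots> \<le> 3" by (rule card3)
  finally show "num_reps G [aN,bN,cN] \<le> 3" .
next
  fix n assume n: "num_reps n [aN,bN,cN] \<le> 3"
  show "n \<le> G"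
  proof (rule ccontr)
    assume "\<not> n \<le> G"
    then have nG: "n > G" by simp
    obtain s e where se: "0 \<le> s" "s < a" "n = b * s + a * e" using decomp[OF apos cop] by blast
    obtain p1 p2 p3 p4 v where P: "distinct [p1,p2,p3,p4]"
      "p1 \<in> PS a b m t s v" "p2 \<in> PS a b m t s v" "p3 \<in> PS a b m t s v" "p4 \<in> PS a b m t s v"
      "b*s + a*v \<le> G + a" using low se(1,2) unfolding Low_def by blast
    have "a * (e - v + 1) > 0" using nG se(3) P(6) by (simp add: algebra_simps)
    then have "e - v + 1 > 0" using apos by (simp add: zero_less_mult_iff)
    then have ve: "v \<le> e" by simp
    have sub: "set [p1,p2,p3,p4] \<subseteq> PS a b m t s e" using P(2-5) PS_mono[OF ve, of a b m t s] by auto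
    have "4 = card (set [p1,p2,p3,p4])" using P(1) by (simp only: distinct_card) simp
    also have "\<dots> \<le> card (PS a b m t s e)"
      using sub PS_finite[OF mpos t0 apos cpos se(1)] by (intro card_mono)
    also have "\<dots> = num_reps n [aN,bN,cN]"
      using reduction[OF aN bN cN apos mpos cop se] by simp
    finally show False using n by simp
  qed
qed




lemma zle: fixes m z K q :: int assumes "m > 0" "m * z \<le> K" "K < m * (q + 1)" shows "z \<le> q"
proof -
  have "m * z < m * (q+1)" using assms by linarith
  then have "z < q + 1" using assms(1) by (simp add: mult_less_cancel_left_pos)
  then show ?thesis by simp
qed

lemma divb: fixes m x :: int assumes "m > 0" shows "m * (x div m) \<le> x" "x < m * (x div m + 1)"
proof -
  have e: "m * (x div m) + x mod m = x" by (rule mult_div_mod_eq)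
  have "0 \<le> x mod m" "x mod m < m" using assms by auto
  then show "m * (x div m) \<le> x" using e by linarith
  have "m * (x div m + 1) = m * (x div m) + m" by (simp add: algebra_simps)
  then show "x < m * (x div m + 1)" using e \<open>x mod m < m\<close> by linarith
qed

lemma jbig:
  fixes a b m t s e j z J :: int
  assumes "m > 0" "t \<ge> 0" "m*b - t*a > 0" "m * z \<le> s + j * a" "j * b - t * z \<le> e" "j \<ge> J"
    "J*(m*b - t*a) - t*s > m*e"
  shows False
proof -
  have g: "m * (j * b - t * z) \<ge> j * (m * b - t * a) - t * s" using genbound[OF assms(2,4)] .
  have "m * (j * b - t * z) \<le> m * e" using assms(1,5) by (simp add: mult_left_mono)
  moreover have "j * (m * b - t * a) \<ge> J * (m*b - t*a)" using assms(3,6) by (simp add: mult_right_mono)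
  ultimately show False using g assms(7) by linarith
qed

lemma lowI:
  assumes "distinct [p1,p2,p3,p4]" "p1 \<in> PS a b m t s v" "p2 \<in> PS a b m t s v" "p3 \<in> PS a b m t s v"
    "p4 \<in> PS a b m t s v" "b*s + a*v \<le> G + a"
  shows "\<exists>p1 p2 p3 p4 v. distinct [p1,p2,p3,p4] \<and>
     p1 \<in> PS a b m t s v \<and> p2 \<in> PS a b m t s v \<and> p3 \<in> PS a b m t s v \<and> p4 \<in> PS a b m t s v
     \<and> b*s + a*v \<le> G + a"
  using assms by blast

lemma caseG:
  fixes a b m t r :: int
  assumes b2a: "b \<ge> 2*a+1" and m2t: "m \<ge> 2*t" and t1: "t \<ge> 1" and r3: "r \<ge> 3"
    and ra: "r*m + 1 \<le> a" and ar: "a \<le> (r+1)*m"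
  defines "c \<equiv> m*b - t*a"
  defines "tp \<equiv> (a - r*m - 1)*b + (r+3)*c - a" and "sc \<equiv> (m-1)*b + (r+2)*c - a"
  shows "Low a b m t (max tp sc) \<and> Up a b m t (max tp sc)"
proof -
  have mpos: "m > 0" using m2t t1 by linarith
  have apos: "a > 0" using ra r3 mpos by (smt (verit) mult_pos_pos)
  have rm2: "r*m \<ge> 2*(r*t)" using m2t r3 by (simp add: mult_left_mono)
  have bm4: "b*m \<ge> 4*(a*t)"
  proof -
    have "b*m \<ge> (2*a)*(2*t)" using b2a m2t apos t1 by (intro mult_mono) auto
    then show ?thesis by (simp add: algebra_simps)
  qed
  have rt: "r*t \<ge> t" using r3 t1 by (simp add: mult_le_cancel_right1)
  have brt: "b \<ge> (r+3)*t + 1" using b2a ra rm2 rt by (simp add: algebra_simps)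
  have cc: "c = b*m - a*t" unfolding c_def by (simp add: mult.commute)
  have "a*t > 0" using apos t1 by simp
  then have cpos: "c > 0" using bm4 cc by linarith
  have atr: "a*t \<le> (r+1)*m*t" using ar t1 by (simp add: mult_right_mono)
  have Mtp: "max tp sc \<ge> tp" and Msc: "max tp sc \<ge> sc" by auto
  have tpa: "tp + a = a*b - b + 3*(b*m) - (r+3)*(a*t)" unfolding tp_def c_def by (simp add: algebra_simps)
  have sca: "sc + a = (m-1)*b + (r+2)*(b*m) - (r+2)*(a*t)" unfolding sc_def c_def by (simp add: algebra_simps)
  show ?thesis
  proof
    show "Low a b m t (max tp sc)"
      unfolding Low_def
    proof (intro allI impI)
      fix s assume s: "0 \<le> s \<and> s < a"
      define q where "q = s div m"
      have q1: "m*q \<le> s" "s < m*(q+1)" using divb[OF mpos, of s] unfolding q_def by auto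
      have q0: "q \<ge> 0" unfolding q_def using s mpos by (simp add: pos_imp_zdiv_nonneg_iff)
      have qr: "q \<le> r" using zle[OF mpos q1(1), of r] s ar by (simp add: algebra_simps)
      consider "q \<ge> 3" | "q = 2" | "q = 1" | "q = 0" using q0 by linarith
      then show "\<exists>p1 p2 p3 p4 v. distinct [p1,p2,p3,p4] \<and>
     p1 \<in> PS a b m t s v \<and> p2 \<in> PS a b m t s v \<and> p3 \<in> PS a b m t s v \<and> p4 \<in> PS a b m t s v
     \<and> b*s + a*v \<le> max tp sc + a"
      proof cases
        case 1
        define v where "v = - t*(q-3)"
        have m1: "(0, nat (q - k)) \<in> PS a b m t s v" if "k \<in> {0,1,2,3}" for k
        proof -
          have k: "0 \<le> k" "k \<le> 3" using that by auto
          have "m * (q - k) \<le> m * q" using mpos k by simp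
          moreover have "t * (q - 3) \<le> t * (q - k)" using t1 k by simp
          ultimately show ?thesis using q1 1 k unfolding v_def by simp
        qed
        have at0: "a*t \<ge> 0" using apos t1 by simp
        have bs: "b*s \<le> b*(m*q + m - 1)" using q1 b2a apos by (intro mult_left_mono) (auto simp: algebra_simps)
        have rq: "(r - q)*(b*m - a*t) \<ge> 0" using qr cpos cc by simp
        have "b*s + a*v \<le> sc + a" using bs rq bm4 sca at0 unfolding v_def by (simp add: algebra_simps)
        then have "b*s + a*v \<le> max tp sc + a" using Msc by linarith
        moreover have "distinct [(0::nat, nat (q-0)), (0, nat (q-1)), (0, nat (q-2)), (0, nat (q-3))]" using 1 by auto
        ultimately show ?thesis using lowI[OF _ m1[of 0] m1[of 1] m1[of 2] m1[of 3]] by simp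
      next
        case 2
        define q1 where "q1 = (s + a) div m"
        have h1: "m*q1 \<le> s + a" "s + a < m*(q1+1)" using divb[OF mpos, of "s+a"] unfolding q1_def by auto
        have q1r: "q1 \<le> r + 3" using zle[OF mpos h1(1), of "r+3"] q1 2 ar by (simp add: algebra_simps)
        have q10: "q1 \<ge> 0" using h1 s mpos by (smt (verit) mult_le_0_iff)
        define v where "v = b - t*q1"
        have tq: "t*q1 \<le> t*(r+3)" using q1r t1 by simp
        have at0: "a*t \<ge> 0" using apos t1 by simp
        have mem: "(0,0) \<in> PS a b m t s v" "(0,1) \<in> PS a b m t s v" "(0,2) \<in> PS a b m t s v"
           "(1, nat q1) \<in> PS a b m t s v"
          using q1 2 tq brt t1 q10 h1 s mpos unfolding v_def by (auto simp: algebra_simps)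
        have bnd: "b*s + a*v \<le> max tp sc + a"
        proof (cases "q1 = r + 3")
          case True
          have bs: "b*s \<le> b*(3*m - 1)" using q1 2 b2a apos by (intro mult_left_mono) (auto simp: algebra_simps)
          have "b*s + a*v \<le> tp + a" using bs tpa True unfolding v_def by (simp add: algebra_simps)
          then show ?thesis using Mtp by linarith
        next
          case False
          then have q1r2: "q1 \<le> r + 2" using q1r by simp
          have bs: "b*(s+a) \<le> b*(m*q1 + m - 1)" using h1 b2a apos by (intro mult_left_mono) (auto simp: algebra_simps)
          have rq: "(r + 2 - q1)*(b*m - a*t) \<ge> 0" using q1r2 cpos cc by simp
          have "b*s + a*v \<le> sc + a" using bs rq sca at0 unfolding v_def by (simp add: algebra_simps)
          then show ?thesis using Msc by linarith
        qed
        have "distinct [(0::nat,0::nat), (0,1), (0,2), (1, nat q1)]" by simp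
        then show ?thesis by (rule lowI[OF _ mem bnd])
      next
        case 3
        define q1 where "q1 = (s + a) div m"
        have h1: "m*q1 \<le> s + a" "s + a < m*(q1+1)" using divb[OF mpos, of "s+a"] unfolding q1_def by auto
        have q1r: "q1 \<le> r + 2" using zle[OF mpos h1(1), of "r+2"] q1 3 ar by (simp add: algebra_simps)
        have q1r': "r + 1 \<le> q1" using zle[OF mpos _ h1(2), of "r+1"] q1 3 ra by (simp add: algebra_simps)
        define v where "v = b - t*(q1 - 1)"
        have tq: "t*q1 \<le> t*(r+2)" using q1r t1 by simp
        have at0: "a*t \<ge> 0" using apos t1 by simp
        have mq: "m*(q1 - 1) \<le> m*q1" using mpos by simp
        have mem: "(0,0) \<in> PS a b m t s v" "(0,1) \<in> PS a b m t s v" "(1, nat q1) \<in> PS a b m t s v"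
           "(1, nat (q1 - 1)) \<in> PS a b m t s v"
          using q1 3 tq brt t1 q1r' h1 s mpos mq r3 unfolding v_def by (auto simp: algebra_simps)
        have bs: "b*s \<le> b*(2*m - 1)" using q1 3 b2a apos by (intro mult_left_mono) (auto simp: algebra_simps)
        have rq: "(q1 - 1 - r)*(a*t) \<ge> 0" using q1r' at0 by simp
        have "b*s + a*v \<le> tp + a" using bs rq tpa bm4 at0 unfolding v_def by (simp add: algebra_simps)
        then have bnd: "b*s + a*v \<le> max tp sc + a" using Mtp by linarith
        have "distinct [(0::nat,0::nat), (0,1), (1, nat q1), (1, nat (q1 - 1))]" using q1r' r3 by auto
        then show ?thesis by (rule lowI[OF _ mem bnd])
      next
        case 4
        define q1 where "q1 = (s + a) div m"
        have h1: "m*q1 \<le> s + a" "s + a < m*(q1+1)" using divb[OF mpos, of "s+a"] unfolding q1_def by auto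
        have q1r: "q1 \<le> r + 1" using zle[OF mpos h1(1), of "r+1"] q1 4 ar by (simp add: algebra_simps)
        have q1r': "r \<le> q1" using zle[OF mpos _ h1(2), of "r"] q1 4 ra s by (simp add: algebra_simps)
        define v where "v = b - t*(q1 - 2)"
        have tq: "t*q1 \<le> t*(r+1)" using q1r t1 by simp
        have at0: "a*t \<ge> 0" using apos t1 by simp
        have mq: "m*(q1 - 1) \<le> m*q1" "m*(q1 - 2) \<le> m*q1" using mpos by simp_all
        have mem: "(0,0) \<in> PS a b m t s v" "(1, nat q1) \<in> PS a b m t s v"
           "(1, nat (q1 - 1)) \<in> PS a b m t s v" "(1, nat (q1 - 2)) \<in> PS a b m t s v"
          using q1 4 tq brt t1 q1r' h1 s mpos mq r3 unfolding v_def by (auto simp: algebra_simps)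
        have bs: "b*s \<le> b*(m - 1)" using q1 4 b2a apos by (intro mult_left_mono) (auto simp: algebra_simps)
        have rq: "(q1 - r)*(a*t) \<ge> 0" using q1r' at0 by simp
        have "b*s + a*v \<le> tp + a" using bs rq tpa bm4 at0 unfolding v_def by (simp add: algebra_simps)
        then have bnd: "b*s + a*v \<le> max tp sc + a" using Mtp by linarith
        have "distinct [(0::nat,0::nat), (1, nat q1), (1, nat (q1 - 1)), (1, nat (q1 - 2))]" using q1r' r3 by auto
        then show ?thesis by (rule lowI[OF _ mem bnd])
      qed
    qed
  next
    show "Up a b m t (max tp sc)"
    proof (cases "b*(a - r*m) \<ge> t*a")
      case True
      have "tp - sc = b*(a - r*m) - t*a" unfolding tp_def sc_def c_def by (simp add: algebra_simps)
      then have M: "max tp sc = tp" using True by simp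
      define s0 where "s0 = 3*m - 1"
      define e0 where "e0 = b - (r+3)*t - 1"
      have rm3: "r*m \<ge> 3*m" using r3 mpos by simp
      have s0a: "0 \<le> s0" "s0 < a" unfolding s0_def using mpos ra rm3 by linarith+
      have G: "tp = b*s0 + a*e0" unfolding tp_def s0_def e0_def c_def by (simp add: algebra_simps)
      have sub: "PS a b m t s0 e0 \<subseteq> {(0,0),(0,1),(0,2)}"
      proof
        fix p assume p: "p \<in> PS a b m t s0 e0"
        obtain j z where pj: "p = (j,z)" by (cases p)
        have adm: "m * int z \<le> s0 + int j * a" and vl: "int j * b - t * int z \<le> e0" using p pj by auto
        consider "j = 0" | "j = 1" | "j \<ge> 2" by linarith
        then show "p \<in> {(0,0),(0,1),(0,2)}"
        proof cases
          case 1
          have "int z \<le> 2" using zle[OF mpos, of "int z" s0 2] adm 1 unfolding s0_def by (simp add: algebra_simps)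
          then show ?thesis using pj 1 by auto
        next
          case 2
          have "int z \<le> r + 3" using zle[OF mpos, of "int z" "s0 + a" "r+3"] adm 2 ar unfolding s0_def by (simp add: algebra_simps)
          then have "t * int z \<le> t * (r+3)" using t1 by simp
          then show ?thesis using vl 2 unfolding e0_def by (simp add: algebra_simps)
        next
          case 3
          have "(r+2)*t \<le> b" using brt t1 by (simp add: algebra_simps)
          then have mb: "m*b \<ge> m*((r+2)*t)" using mpos by (intro mult_left_mono) auto
          have "2*(m*b - t*a) - t*s0 > m*e0"
            using mb atr mpos t1 unfolding s0_def e0_def by (simp add: algebra_simps)
          then show ?thesis using jbig[OF mpos _ _ adm vl, of 2] t1 cpos cc 3 by (simp add: c_def)
        qed
      qed
      show ?thesis unfolding Up_def M using s0a G sub by blast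
    next
      case False
      have "tp - sc = b*(a - r*m) - t*a" unfolding tp_def sc_def c_def by (simp add: algebra_simps)
      then have M: "max tp sc = sc" using False by simp
      have am: "a \<le> (r+1)*m - 1"
      proof (rule ccontr)
        assume "\<not> ?thesis"
        then have "a - r*m = m" using ar by (simp add: algebra_simps)
        then show False using False cpos unfolding c_def by (simp add: mult.commute)
      qed
      define s0 where "s0 = (r+3)*m - 1 - a"
      define e0 where "e0 = b - (r+2)*t - 1"
      have rm3: "r*m \<ge> 3*m" using r3 mpos by simp
      have s0a: "0 \<le> s0" "s0 < a" "s0 \<le> 3*m - 2" unfolding s0_def using mpos ra rm3 am by (simp_all add: algebra_simps, linarith+)
      have G: "sc = b*s0 + a*e0" unfolding sc_def s0_def e0_def c_def by (simp add: algebra_simps)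
      have sub: "PS a b m t s0 e0 \<subseteq> {(0,0),(0,1),(0,2)}"
      proof
        fix p assume p: "p \<in> PS a b m t s0 e0"
        obtain j z where pj: "p = (j,z)" by (cases p)
        have adm: "m * int z \<le> s0 + int j * a" and vl: "int j * b - t * int z \<le> e0" using p pj by auto
        consider "j = 0" | "j = 1" | "j \<ge> 2" by linarith
        then show "p \<in> {(0,0),(0,1),(0,2)}"
        proof cases
          case 1
          have "int z \<le> 2" using zle[OF mpos, of "int z" s0 2] adm 1 s0a by (simp add: algebra_simps)
          then show ?thesis using pj 1 by auto
        next
          case 2
          have "int z \<le> r + 2" using zle[OF mpos, of "int z" "s0 + a" "r+2"] adm 2 unfolding s0_def by (simp add: algebra_simps)
          then have "t * int z \<le> t * (r+2)" using t1 by simp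
          then show ?thesis using vl 2 unfolding e0_def by (simp add: algebra_simps)
        next
          case 3
          have mb: "m*b \<ge> m*((r+3)*t + 1)" using brt mpos t1 by (intro mult_left_mono) auto
          have ts: "t*s0 \<le> t*(3*m - 2)" using s0a t1 by (intro mult_left_mono) auto
          have "2*(m*b - t*a) - t*s0 > m*e0"
            using mb atr mpos t1 ts unfolding e0_def by (simp add: algebra_simps)
          then show ?thesis using jbig[OF mpos _ _ adm vl, of 2] t1 cpos cc 3 by (simp add: c_def)
        qed
      qed
      show ?thesis unfolding Up_def M using s0a G sub by blast
    qed
  qed
qed




lemma upI: "0 \<le> s0 \<Longrightarrow> s0 < a \<Longrightarrow> G = b*s0 + a*e0 \<Longrightarrow> PS a b m t s0 e0 \<subseteq> {p1,p2,p3} \<Longrightarrow> Up a b m t G"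
  unfolding Up_def by blast

lemma caseA:
  fixes a b m t :: int
  assumes a1: "a \<ge> 1" and m4a: "m \<ge> 4*a" and m2t: "m \<ge> 2*t" and b5a: "2*b \<ge> 5*a" and t0: "t \<ge> 0"
  shows "Low a b m t ((4*a - 1)*b - a) \<and> Up a b m t ((4*a - 1)*b - a)"
proof -
  have mpos: "m > 0" using a1 m4a by linarith
  have bpos: "b > 0" using a1 b5a by linarith
  have mb5: "2*(m*b) \<ge> 2*(5*(t*a))"
  proof -
    have "(2*t)*(5*a) \<le> m*(2*b)" by (rule mult_mono) (use m2t b5a mpos t0 a1 in auto)
    then show ?thesis by (simp add: algebra_simps)
  qed
  have cpos: "m*b - t*a > 0" using mb5 t0 a1 mpos bpos by (smt (verit) mult_pos_pos)
  show ?thesis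
  proof
    show "Low a b m t ((4*a - 1)*b - a)" unfolding Low_def
    proof (intro allI impI)
      fix s assume s: "0 \<le> s \<and> s < a"
      have bs: "b*s \<le> b*(a-1)" using s bpos by (intro mult_left_mono) auto
      have d: "distinct [(0::nat,0::nat),(1,0),(2,0),(3,0)]" by simp
      have mem: "(0,0) \<in> PS a b m t s (3*b)" "(1,0) \<in> PS a b m t s (3*b)" "(2,0) \<in> PS a b m t s (3*b)"
        "(3,0) \<in> PS a b m t s (3*b)" using s bpos a1 by auto
      have "b*s + a*(3*b) \<le> ((4*a - 1)*b - a) + a" using bs by (simp add: algebra_simps)
      then show "\<exists>p1 p2 p3 p4 v. distinct [p1,p2,p3,p4] \<and>
     p1 \<in> PS a b m t s v \<and> p2 \<in> PS a b m t s v \<and> p3 \<in> PS a b m t s v \<and> p4 \<in> PS a b m t s v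
     \<and> b*s + a*v \<le> ((4*a - 1)*b - a) + a" by (rule lowI[OF d mem])
    qed
  next
    have G: "(4*a - 1)*b - a = b*(a-1) + a*(3*b - 1)" by (simp add: algebra_simps)
    have sub: "PS a b m t (a-1) (3*b - 1) \<subseteq> {(0,0),(1,0),(2,0)}"
    proof
      fix p assume p: "p \<in> PS a b m t (a-1) (3*b - 1)"
      obtain j z where pj: "p = (j,z)" by (cases p)
      have adm: "m * int z \<le> (a-1) + int j * a" and vl: "int j * b - t * int z \<le> 3*b - 1" using p pj by auto
      consider "j \<le> 3" | "j \<ge> 4" by linarith
      then show "p \<in> {(0,0),(1,0),(2,0)}"
      proof cases
        case 1
        have "int j * a \<le> 3 * a" using 1 a1 by (intro mult_right_mono) auto
        then have "int z \<le> 0" using zle[OF mpos adm, of 0] m4a by simp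
        then have z: "z = 0" by simp
        then have "j \<noteq> 3" using vl by auto
        then show ?thesis using 1 z pj by auto
      next
        case 2
        have "4*(m*b - t*a) - t*(a-1) > m*(3*b - 1)" using mb5 mpos t0 by (simp add: algebra_simps)
        then show ?thesis using jbig[OF mpos t0 cpos adm vl, of 4] 2 by simp
      qed
    qed
    show "Up a b m t ((4*a - 1)*b - a)" using G sub a1 by (intro upI[of "a-1" a _ b "3*b-1"]) auto
  qed
qed

lemma xymonos:
  fixes x y :: int assumes "x \<ge> 1" "x \<le> y" "y \<le> 2*x" "3*x \<le> 2*y"
  shows "x*x \<le> x*y" "x*y \<le> y*y" "y*y \<le> 2*(x*y)" "x*y \<le> 2*(x*x)" "3*(x*x) \<le> 2*(x*y)"
    "3*(x*y) \<le> 2*(y*y)" "0 \<le> x*y" "0 \<le> y*y" "0 \<le> x*x"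
proof -
  have x0: "x \<ge> 0" "y \<ge> 0" using assms by auto
  show "x*x \<le> x*y" using assms x0 by (simp add: mult_left_mono)
  show "x*y \<le> y*y" using assms x0 by (simp add: mult_right_mono)
  have "y*y \<le> (2*x)*y" using assms x0 by (simp add: mult_right_mono)
  then show "y*y \<le> 2*(x*y)" by simp
  have "x*y \<le> x*(2*x)" using assms x0 by (simp add: mult_left_mono)
  then show "x*y \<le> 2*(x*x)" by simp
  have "(3*x)*x \<le> (2*y)*x" using assms x0 by (intro mult_right_mono) auto
  then show "3*(x*x) \<le> 2*(x*y)" by (simp add: algebra_simps)
  have "(3*x)*y \<le> (2*y)*y" using assms x0 by (intro mult_right_mono) auto
  then show "3*(x*y) \<le> 2*(y*y)" by (simp add: algebra_simps)
  show "0 \<le> x*y" "0 \<le> y*y" "0 \<le> x*x" using x0 by auto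
qed




lemma caseB:
  fixes x y :: int
  assumes x1: "x \<ge> 1" and xy: "x \<le> y" and y2x: "y \<le> 2*x" and y32: "3*x \<le> 2*y"
  defines aa: "a \<equiv> 2*x + y" and bb: "b \<equiv> 3*x + 4*y" and mm: "m \<equiv> 3*x + 5*y" and tt: "t \<equiv> x + 2*y"
  defines GG: "G \<equiv> (4*a - 1)*b - t*a - a"
  shows "Low a b m t G \<and> Up a b m t G"
proof -
  note M = xymonos[OF x1 xy y2x y32]
  have mpos: "m > 0" and apos: "a > 0" and bpos: "b > 0" and t0: "t \<ge> 0" using x1 xy unfolding aa bb mm tt by auto
  have mb5: "m*b \<ge> 5*(t*a)" using M unfolding aa bb mm tt by (simp add: algebra_simps)
  have "t*a > 0" using x1 xy apos unfolding tt by simp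
  then have cpos: "m*b - t*a > 0" using mb5 by linarith
  show ?thesis
  proof
    show "Low a b m t G" unfolding Low_def
    proof (intro allI impI)
      fix s assume s: "0 \<le> s \<and> s < a"
      show "\<exists>p1 p2 p3 p4 v. distinct [p1,p2,p3,p4] \<and>
     p1 \<in> PS a b m t s v \<and> p2 \<in> PS a b m t s v \<and> p3 \<in> PS a b m t s v \<and> p4 \<in> PS a b m t s v
     \<and> b*s + a*v \<le> G + a"
      proof (cases "s < 2*y - 3*x")
        case True
        have bs: "b*s \<le> b*(2*y - 3*x - 1)" using True bpos by (intro mult_left_mono) auto
        have d: "distinct [(0::nat,0::nat),(1,0),(2,0),(3,0)]" by simp
        have mem: "(0,0) \<in> PS a b m t s (3*b)" "(1,0) \<in> PS a b m t s (3*b)" "(2,0) \<in> PS a b m t s (3*b)"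
          "(3,0) \<in> PS a b m t s (3*b)" using s bpos apos by auto
        have "b*s + a*(3*b) \<le> G + a" using bs M unfolding GG aa bb mm tt by (simp add: algebra_simps)
        then show ?thesis by (rule lowI[OF d mem])
      next
        case False
        have bs: "b*s \<le> b*(a - 1)" using s bpos by (intro mult_left_mono) auto
        have d: "distinct [(0::nat,0::nat),(1,0),(2,0),(3,1)]" by simp
        have mem: "(0,0) \<in> PS a b m t s (3*b - t)" "(1,0) \<in> PS a b m t s (3*b - t)" "(2,0) \<in> PS a b m t s (3*b - t)"
          "(3,1) \<in> PS a b m t s (3*b - t)" using s bpos apos False x1 xy unfolding aa bb mm tt by auto
        have "b*s + a*(3*b - t) \<le> G + a" using bs unfolding GG by (simp add: algebra_simps)
        then show ?thesis by (rule lowI[OF d mem])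
      qed
    qed
  next
    have G: "G = b*(a-1) + a*(3*b - t - 1)" unfolding GG by (simp add: algebra_simps)
    have m3a: "m \<ge> 3*a" using y32 unfolding mm aa by simp
    have sub: "PS a b m t (a-1) (3*b - t - 1) \<subseteq> {(0,0),(1,0),(2,0)}"
    proof
      fix p assume p: "p \<in> PS a b m t (a-1) (3*b - t - 1)"
      obtain j z where pj: "p = (j,z)" by (cases p)
      have adm: "m * int z \<le> (a-1) + int j * a" and vl: "int j * b - t * int z \<le> 3*b - t - 1" using p pj by auto
      consider "j \<le> 2" | "j = 3" | "j \<ge> 4" by linarith
      then show "p \<in> {(0,0),(1,0),(2,0)}"
      proof cases
        case 1
        have "int j * a \<le> 2 * a" using 1 apos by (intro mult_right_mono) auto
        then have "int z \<le> 0" using zle[OF mpos adm, of 0] m3a by simp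
        then have z: "z = 0" by simp
        then show ?thesis using 1 z pj by auto
      next
        case 2
        have "int z \<le> 1" using zle[OF mpos adm, of 1] m3a 2 apos by simp
        then have "t * int z \<le> t * 1" using t0 by (intro mult_left_mono) auto
        then show ?thesis using vl 2 by simp
      next
        case 3
        have "m*t \<ge> 0" using mpos t0 by simp
        moreover have "4*(m*b - t*a) - t*(a-1) - m*(3*b - t - 1) = (m*b - 5*(t*a)) + m*t + m + t" by (simp add: algebra_simps)
        ultimately have "4*(m*b - t*a) - t*(a-1) > m*(3*b - t - 1)" using mb5 mpos t0 by linarith
        then show ?thesis using jbig[OF mpos t0 cpos adm vl, of 4] 3 by simp
      qed
    qed
    show "Up a b m t G" using G sub apos by (intro upI[of "a-1" a _ b "3*b-t-1"]) auto
  qed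
qed




lemma caseC:
  fixes x y :: int
  assumes x1: "x \<ge> 1" and xy: "x \<le> y" and y2x: "y \<le> 2*x" and y32: "3*x \<le> 2*y"
  defines aa: "a \<equiv> 2*x + y" and bb: "b \<equiv> 3*x + 4*y" and mm: "m \<equiv> 2*x + 3*y" and tt: "t \<equiv> x + y"
  defines GG: "G \<equiv> (4*(x+y) - 1)*b - a"
  shows "Low a b m t G \<and> Up a b m t G"
proof -
  note M = xymonos[OF x1 xy y2x y32]
  have mpos: "m > 0" and apos: "a > 0" and bpos: "b > 0" and t0: "t \<ge> 0" using x1 xy unfolding aa bb mm tt by auto
  have xx: "x*x \<ge> 1" using mult_mono[OF x1 x1] x1 by simp
  have xy1: "x*y \<ge> 1" and yy1: "y*y \<ge> 1" using mult_mono[OF x1 order_trans[OF x1 xy]] mult_mono[OF order_trans[OF x1 xy] order_trans[OF x1 xy]] x1 xy by simp_all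
  have cpos: "m*b - t*a > 0" using M  xx xy1 yy1 x1 xy unfolding aa bb mm tt by (simp add: algebra_simps)
  show ?thesis
  proof
    show "Low a b m t G" unfolding Low_def
    proof (intro allI impI)
      fix s assume s: "0 \<le> s \<and> s < a"
      show "\<exists>p1 p2 p3 p4 v. distinct [p1,p2,p3,p4] \<and>
     p1 \<in> PS a b m t s v \<and> p2 \<in> PS a b m t s v \<and> p3 \<in> PS a b m t s v \<and> p4 \<in> PS a b m t s v
     \<and> b*s + a*v \<le> G + a"
      proof -
        consider "s < 2*y" | "2*y \<le> s" using M  by linarith
        then show ?thesis
        proof cases
          case 1
          have bs: "b*s \<le> b*(2*y - 1)" using 1 s bpos by (intro mult_left_mono) auto
          have d: "distinct [(0::nat,0::nat),(1::nat,0::nat),(2::nat,0::nat),(2::nat,1::nat)]" by simp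
          have mem: "(0,0) \<in> PS a b m t s (2*b)" "(1,0) \<in> PS a b m t s (2*b)" "(2,0) \<in> PS a b m t s (2*b)" "(2,1) \<in> PS a b m t s (2*b)"
            using 1 s x1 xy y2x y32  unfolding aa bb mm tt by auto
          have "b*s + a*(2*b) \<le> G + a" using bs M  unfolding GG aa bb mm tt by (simp add: algebra_simps)
          then show ?thesis by (rule lowI[OF d mem])
        next
          case 2
          have bs: "b*s \<le> b*(a - 1)" using 2 s bpos by (intro mult_left_mono) auto
          have d: "distinct [(0::nat,0::nat),(1::nat,0::nat),(1::nat,1::nat),(2::nat,1::nat)]" by simp
          have mem: "(0,0) \<in> PS a b m t s (2*b - t)" "(1,0) \<in> PS a b m t s (2*b - t)" "(1,1) \<in> PS a b m t s (2*b - t)" "(2,1) \<in> PS a b m t s (2*b - t)"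
            using 2 s x1 xy y2x y32  unfolding aa bb mm tt by auto
          have "b*s + a*(2*b - t) \<le> G + a" using bs M  unfolding GG aa bb mm tt by (simp add: algebra_simps)
          then show ?thesis by (rule lowI[OF d mem])
        qed
      qed
    qed
  next
    have G: "G = b*(2*y - 1) + a*(2*b - 1)" unfolding GG aa bb mm tt by (simp add: algebra_simps)
    have sub: "PS a b m t (2*y - 1) (2*b - 1) \<subseteq> {(0,0),(1,0),(2,1)}"
    proof
      fix p assume p: "p \<in> PS a b m t (2*y - 1) (2*b - 1)"
      obtain j z where pj: "p = (j,z)" by (cases p)
      have adm: "m * int z \<le> (2*y - 1) + int j * a" and vl: "int j * b - t * int z \<le> 2*b - 1" using p pj by auto
      consider "j = 0" | "j = 1" | "j = 2" | "j \<ge> 3" by linarith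
      then show "p \<in> {(0,0),(1,0),(2,1)}"
      proof cases
        case 1
        have "int z \<le> 0" using zle[OF mpos, of "int z" "(2*y - 1) + 0*a" "0"] adm 1 x1 xy y2x y32  unfolding aa bb mm tt by (simp add: algebra_simps)
        then have "z = 0" by linarith
        then show ?thesis using vl pj 1 t0 bpos x1 xy unfolding aa bb mm tt by auto
      next
        case 2
        have "int z \<le> 0" using zle[OF mpos, of "int z" "(2*y - 1) + 1*a" "0"] adm 2 x1 xy y2x y32  unfolding aa bb mm tt by (simp add: algebra_simps)
        then have "z = 0" by linarith
        then show ?thesis using vl pj 2 t0 bpos x1 xy unfolding aa bb mm tt by auto
      next
        case 3
        have "int z \<le> 1" using zle[OF mpos, of "int z" "(2*y - 1) + 2*a" "1"] adm 3 x1 xy y2x y32  unfolding aa bb mm tt by (simp add: algebra_simps)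
        then have "z = 0 \<or> z = 1" by linarith
        then show ?thesis using vl pj 3 t0 bpos x1 xy unfolding aa bb mm tt by auto
      next
        case 4
        have "3*(m*b - t*a) - t*(2*y - 1) > m*(2*b - 1)" using M  xx xy1 yy1 x1 xy unfolding aa bb mm tt by (simp add: algebra_simps del: mult_le_cancel_right mult_le_cancel_left)
        then show ?thesis using jbig[OF mpos t0 cpos adm vl, of 3] 4 by simp
      qed
    qed
    have s0a: "0 \<le> 2*y - 1" "2*y - 1 < a" using x1 xy y2x y32  unfolding aa bb mm tt by auto
    show "Up a b m t G" by (rule upI[OF s0a G sub])
  qed
qed

lemma caseD:
  fixes x y :: int
  assumes x1: "x \<ge> 1" and xy: "x \<le> y" and y2x: "y \<le> 2*x" and y32: "3*x \<le> 2*y"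
  defines aa: "a \<equiv> 2*x + y" and bb: "b \<equiv> 3*x + 4*y" and mm: "m \<equiv> x + 2*y" and tt: "t \<equiv> y"
  defines GG: "G \<equiv> b*(3*a - 1) - 2*t*a - a"
  shows "Low a b m t G \<and> Up a b m t G"
proof -
  note M = xymonos[OF x1 xy y2x y32]
  have mpos: "m > 0" and apos: "a > 0" and bpos: "b > 0" and t0: "t \<ge> 0" using x1 xy unfolding aa bb mm tt by auto
  have xx: "x*x \<ge> 1" using mult_mono[OF x1 x1] x1 by simp
  have xy1: "x*y \<ge> 1" and yy1: "y*y \<ge> 1" using mult_mono[OF x1 order_trans[OF x1 xy]] mult_mono[OF order_trans[OF x1 xy] order_trans[OF x1 xy]] x1 xy by simp_all
  have cpos: "m*b - t*a > 0" using M  xx xy1 yy1 x1 xy unfolding aa bb mm tt by (simp add: algebra_simps)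
  show ?thesis
  proof
    show "Low a b m t G" unfolding Low_def
    proof (intro allI impI)
      fix s assume s: "0 \<le> s \<and> s < a"
      show "\<exists>p1 p2 p3 p4 v. distinct [p1,p2,p3,p4] \<and>
     p1 \<in> PS a b m t s v \<and> p2 \<in> PS a b m t s v \<and> p3 \<in> PS a b m t s v \<and> p4 \<in> PS a b m t s v
     \<and> b*s + a*v \<le> G + a"
      proof -
        consider "s < y - x" | "y - x \<le> s \<and> s < 2*y - 2*x" | "2*y - 2*x \<le> s" using M  by linarith
        then show ?thesis
        proof cases
          case 1
          have bs: "b*s \<le> b*(y - x - 1)" using 1 s bpos by (intro mult_left_mono) auto
          have d: "distinct [(0::nat,0::nat),(1::nat,0::nat),(2::nat,0::nat),(2::nat,1::nat)]" by simp
          have mem: "(0,0) \<in> PS a b m t s (2*b)" "(1,0) \<in> PS a b m t s (2*b)" "(2,0) \<in> PS a b m t s (2*b)" "(2,1) \<in> PS a b m t s (2*b)"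
            using 1 s x1 xy y2x y32  unfolding aa bb mm tt by auto
          have "b*s + a*(2*b) \<le> G + a" using bs M  unfolding GG aa bb mm tt by (simp add: algebra_simps)
          then show ?thesis by (rule lowI[OF d mem])
        next
          case 2
          have bs: "b*s \<le> b*(2*y - 2*x - 1)" using 2 s bpos by (intro mult_left_mono) auto
          have d: "distinct [(0::nat,0::nat),(1::nat,0::nat),(1::nat,1::nat),(2::nat,1::nat)]" by simp
          have mem: "(0,0) \<in> PS a b m t s (2*b - t)" "(1,0) \<in> PS a b m t s (2*b - t)" "(1,1) \<in> PS a b m t s (2*b - t)" "(2,1) \<in> PS a b m t s (2*b - t)"
            using 2 s x1 xy y2x y32  unfolding aa bb mm tt by auto
          have "b*s + a*(2*b - t) \<le> G + a" using bs M  unfolding GG aa bb mm tt by (simp add: algebra_simps)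
          then show ?thesis by (rule lowI[OF d mem])
        next
          case 3
          have bs: "b*s \<le> b*(a - 1)" using 3 s bpos by (intro mult_left_mono) auto
          have d: "distinct [(0::nat,0::nat),(1::nat,0::nat),(1::nat,1::nat),(2::nat,2::nat)]" by simp
          have mem: "(0,0) \<in> PS a b m t s (2*b - 2*t)" "(1,0) \<in> PS a b m t s (2*b - 2*t)" "(1,1) \<in> PS a b m t s (2*b - 2*t)" "(2,2) \<in> PS a b m t s (2*b - 2*t)"
            using 3 s x1 xy y2x y32  unfolding aa bb mm tt by auto
          have "b*s + a*(2*b - 2*t) \<le> G + a" using bs M  unfolding GG aa bb mm tt by (simp add: algebra_simps)
          then show ?thesis by (rule lowI[OF d mem])
        qed
      qed
    qed
  next
    have G: "G = b*(a - 1) + a*(2*b - 2*t - 1)" unfolding GG aa bb mm tt by (simp add: algebra_simps)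
    have sub: "PS a b m t (a - 1) (2*b - 2*t - 1) \<subseteq> {(0,0),(1,0),(1,1)}"
    proof
      fix p assume p: "p \<in> PS a b m t (a - 1) (2*b - 2*t - 1)"
      obtain j z where pj: "p = (j,z)" by (cases p)
      have adm: "m * int z \<le> (a - 1) + int j * a" and vl: "int j * b - t * int z \<le> 2*b - 2*t - 1" using p pj by auto
      consider "j = 0" | "j = 1" | "j = 2" | "j \<ge> 3" by linarith
      then show "p \<in> {(0,0),(1,0),(1,1)}"
      proof cases
        case 1
        have "int z \<le> 0" using zle[OF mpos, of "int z" "(a - 1) + 0*a" "0"] adm 1 x1 xy y2x y32  unfolding aa bb mm tt by (simp add: algebra_simps)
        then have "z = 0" by linarith
        then show ?thesis using vl pj 1 t0 bpos x1 xy unfolding aa bb mm tt by auto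
      next
        case 2
        have "int z \<le> 1" using zle[OF mpos, of "int z" "(a - 1) + 1*a" "1"] adm 2 x1 xy y2x y32  unfolding aa bb mm tt by (simp add: algebra_simps)
        then have "z = 0 \<or> z = 1" by linarith
        then show ?thesis using vl pj 2 t0 bpos x1 xy unfolding aa bb mm tt by auto
      next
        case 3
        have "int z \<le> 2" using zle[OF mpos, of "int z" "(a - 1) + 2*a" "2"] adm 3 x1 xy y2x y32  unfolding aa bb mm tt by (simp add: algebra_simps)
        then have "z = 0 \<or> z = 1 \<or> z = 2" by linarith
        then show ?thesis using vl pj 3 t0 bpos x1 xy unfolding aa bb mm tt by auto
      next
        case 4
        have "3*(m*b - t*a) - t*(a - 1) > m*(2*b - 2*t - 1)" using M  xx xy1 yy1 x1 xy unfolding aa bb mm tt by (simp add: algebra_simps del: mult_le_cancel_right mult_le_cancel_left)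
        then show ?thesis using jbig[OF mpos t0 cpos adm vl, of 3] 4 by simp
      qed
    qed
    have s0a: "0 \<le> a - 1" "a - 1 < a" using x1 xy y2x y32  unfolding aa bb mm tt by auto
    show "Up a b m t G" by (rule upI[OF s0a G sub])
  qed
qed

lemma caseE:
  fixes x y :: int
  assumes x1: "x \<ge> 1" and xy: "x \<le> y" and y2x: "y \<le> 2*x" and y32: "3*x \<le> 2*y"
  defines aa: "a \<equiv> 2*x + y" and bb: "b \<equiv> 3*x + 4*y" and mm: "m \<equiv> x + y" and tt: "t \<equiv> x"
  defines GG: "G \<equiv> b*(4*x + 3*y - 1) - 3*t*a - a"
  shows "Low a b m t G \<and> Up a b m t G"
proof -
  note M = xymonos[OF x1 xy y2x y32]
  have mpos: "m > 0" and apos: "a > 0" and bpos: "b > 0" and t0: "t \<ge> 0" using x1 xy unfolding aa bb mm tt by auto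
  have xx: "x*x \<ge> 1" using mult_mono[OF x1 x1] x1 by simp
  have xy1: "x*y \<ge> 1" and yy1: "y*y \<ge> 1" using mult_mono[OF x1 order_trans[OF x1 xy]] mult_mono[OF order_trans[OF x1 xy] order_trans[OF x1 xy]] x1 xy by simp_all
  have cpos: "m*b - t*a > 0" using M  xx xy1 yy1 x1 xy unfolding aa bb mm tt by (simp add: algebra_simps)
  show ?thesis
  proof
    show "Low a b m t G" unfolding Low_def
    proof (intro allI impI)
      fix s assume s: "0 \<le> s \<and> s < a"
      show "\<exists>p1 p2 p3 p4 v. distinct [p1,p2,p3,p4] \<and>
     p1 \<in> PS a b m t s v \<and> p2 \<in> PS a b m t s v \<and> p3 \<in> PS a b m t s v \<and> p4 \<in> PS a b m t s v
     \<and> b*s + a*v \<le> G + a"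
      proof -
        consider "s < y - x" | "y - x \<le> s \<and> s < y" | "y \<le> s \<and> s < x + y" | "x + y \<le> s" using M  by linarith
        then show ?thesis
        proof cases
          case 1
          have bs: "b*s \<le> b*(y - x - 1)" using 1 s bpos by (intro mult_left_mono) auto
          have d: "distinct [(0::nat,0::nat),(1::nat,0::nat),(1::nat,1::nat),(2::nat,2::nat)]" by simp
          have mem: "(0,0) \<in> PS a b m t s (2*b - 2*t)" "(1,0) \<in> PS a b m t s (2*b - 2*t)" "(1,1) \<in> PS a b m t s (2*b - 2*t)" "(2,2) \<in> PS a b m t s (2*b - 2*t)"
            using 1 s x1 xy y2x y32  unfolding aa bb mm tt by auto
          have "b*s + a*(2*b - 2*t) \<le> G + a" using bs M  unfolding GG aa bb mm tt by (simp add: algebra_simps)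
          then show ?thesis by (rule lowI[OF d mem])
        next
          case 2
          have bs: "b*s \<le> b*(y - 1)" using 2 s bpos by (intro mult_left_mono) auto
          have d: "distinct [(0::nat,0::nat),(1::nat,0::nat),(1::nat,1::nat),(2::nat,3::nat)]" by simp
          have mem: "(0,0) \<in> PS a b m t s (2*b - 3*t)" "(1,0) \<in> PS a b m t s (2*b - 3*t)" "(1,1) \<in> PS a b m t s (2*b - 3*t)" "(2,3) \<in> PS a b m t s (2*b - 3*t)"
            using 2 s x1 xy y2x y32  unfolding aa bb mm tt by auto
          have "b*s + a*(2*b - 3*t) \<le> G + a" using bs M  unfolding GG aa bb mm tt by (simp add: algebra_simps)
          then show ?thesis by (rule lowI[OF d mem])
        next
          case 3
          have bs: "b*s \<le> b*(x + y - 1)" using 3 s bpos by (intro mult_left_mono) auto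
          have d: "distinct [(0::nat,0::nat),(1::nat,0::nat),(1::nat,1::nat),(1::nat,2::nat)]" by simp
          have mem: "(0,0) \<in> PS a b m t s (b)" "(1,0) \<in> PS a b m t s (b)" "(1,1) \<in> PS a b m t s (b)" "(1,2) \<in> PS a b m t s (b)"
            using 3 s x1 xy y2x y32  unfolding aa bb mm tt by auto
          have "b*s + a*(b) \<le> G + a" using bs M  unfolding GG aa bb mm tt by (simp add: algebra_simps)
          then show ?thesis by (rule lowI[OF d mem])
        next
          case 4
          have bs: "b*s \<le> b*(a - 1)" using 4 s bpos by (intro mult_left_mono) auto
          have d: "distinct [(0::nat,0::nat),(0::nat,1::nat),(1::nat,1::nat),(1::nat,2::nat)]" by simp
          have mem: "(0,0) \<in> PS a b m t s (b - t)" "(0,1) \<in> PS a b m t s (b - t)" "(1,1) \<in> PS a b m t s (b - t)" "(1,2) \<in> PS a b m t s (b - t)"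
            using 4 s x1 xy y2x y32  unfolding aa bb mm tt by auto
          have "b*s + a*(b - t) \<le> G + a" using bs M  unfolding GG aa bb mm tt by (simp add: algebra_simps)
          then show ?thesis by (rule lowI[OF d mem])
        qed
      qed
    qed
  next
    have G: "G = b*(y - 1) + a*(2*b - 3*t - 1)" unfolding GG aa bb mm tt by (simp add: algebra_simps)
    have sub: "PS a b m t (y - 1) (2*b - 3*t - 1) \<subseteq> {(0,0),(1,0),(1,1)}"
    proof
      fix p assume p: "p \<in> PS a b m t (y - 1) (2*b - 3*t - 1)"
      obtain j z where pj: "p = (j,z)" by (cases p)
      have adm: "m * int z \<le> (y - 1) + int j * a" and vl: "int j * b - t * int z \<le> 2*b - 3*t - 1" using p pj by auto
      consider "j = 0" | "j = 1" | "j = 2" | "j \<ge> 3" by linarith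
      then show "p \<in> {(0,0),(1,0),(1,1)}"
      proof cases
        case 1
        have "int z \<le> 0" using zle[OF mpos, of "int z" "(y - 1) + 0*a" "0"] adm 1 x1 xy y2x y32  unfolding aa bb mm tt by (simp add: algebra_simps)
        then have "z = 0" by linarith
        then show ?thesis using vl pj 1 t0 bpos x1 xy unfolding aa bb mm tt by auto
      next
        case 2
        have "int z \<le> 1" using zle[OF mpos, of "int z" "(y - 1) + 1*a" "1"] adm 2 x1 xy y2x y32  unfolding aa bb mm tt by (simp add: algebra_simps)
        then have "z = 0 \<or> z = 1" by linarith
        then show ?thesis using vl pj 2 t0 bpos x1 xy unfolding aa bb mm tt by auto
      next
        case 3
        have "int z \<le> 3" using zle[OF mpos, of "int z" "(y - 1) + 2*a" "3"] adm 3 x1 xy y2x y32  unfolding aa bb mm tt by (simp add: algebra_simps)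
        then have "z = 0 \<or> z = 1 \<or> z = 2 \<or> z = 3" by linarith
        then show ?thesis using vl pj 3 t0 bpos x1 xy unfolding aa bb mm tt by auto
      next
        case 4
        have "3*(m*b - t*a) - t*(y - 1) > m*(2*b - 3*t - 1)" using M  xx xy1 yy1 x1 xy unfolding aa bb mm tt by (simp add: algebra_simps del: mult_le_cancel_right mult_le_cancel_left)
        then show ?thesis using jbig[OF mpos t0 cpos adm vl, of 3] 4 by simp
      qed
    qed
    have s0a: "0 \<le> y - 1" "y - 1 < a" using x1 xy y2x y32  unfolding aa bb mm tt by auto
    show "Up a b m t G" by (rule upI[OF s0a G sub])
  qed
qed

lemma caseF:
  fixes x y :: int
  assumes x1: "x \<ge> 1" and xy: "x \<le> y" and y2x: "y \<le> 2*x" and y32: "3*x \<le> 2*y" and y35: "3*y \<le> 5*x"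
  defines aa: "a \<equiv> 2*x + y" and bb: "b \<equiv> 3*x + 4*y" and mm: "m \<equiv> y" and tt: "t \<equiv> y - x"
  defines GG: "G \<equiv> b*(2*a - 1) - 4*t*a - a"
  shows "Low a b m t G \<and> Up a b m t G"
proof -
  note M = xymonos[OF x1 xy y2x y32]
  have MF1: "3*(y*y) \<le> 5*(x*y)" using mult_right_mono[OF y35, of y] mult_left_mono[OF y35, of x] x1 xy by (simp_all add: algebra_simps)
  have MF2: "3*(x*y) \<le> 5*(x*x)" using mult_right_mono[OF y35, of y] mult_left_mono[OF y35, of x] x1 xy by (simp_all add: algebra_simps)
  have mpos: "m > 0" and apos: "a > 0" and bpos: "b > 0" and t0: "t \<ge> 0" using x1 xy unfolding aa bb mm tt by auto
  have xx: "x*x \<ge> 1" using mult_mono[OF x1 x1] x1 by simp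
  have xy1: "x*y \<ge> 1" and yy1: "y*y \<ge> 1" using mult_mono[OF x1 order_trans[OF x1 xy]] mult_mono[OF order_trans[OF x1 xy] order_trans[OF x1 xy]] x1 xy by simp_all
  have cpos: "m*b - t*a > 0" using M MF1 MF2 xx xy1 yy1 x1 xy unfolding aa bb mm tt by (simp add: algebra_simps)
  show ?thesis
  proof
    show "Low a b m t G" unfolding Low_def
    proof (intro allI impI)
      fix s assume s: "0 \<le> s \<and> s < a"
      show "\<exists>p1 p2 p3 p4 v. distinct [p1,p2,p3,p4] \<and>
     p1 \<in> PS a b m t s v \<and> p2 \<in> PS a b m t s v \<and> p3 \<in> PS a b m t s v \<and> p4 \<in> PS a b m t s v
     \<and> b*s + a*v \<le> G + a"
      proof -
        consider "s < 2*y - 2*x" | "2*y - 2*x \<le> s \<and> s < y" | "y \<le> s \<and> s < 3*y - 2*x" | "3*y - 2*x \<le> s \<and> s < 2*y" | "2*y \<le> s" using M MF1 MF2 by linarith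
        then show ?thesis
        proof cases
          case 1
          have bs: "b*s \<le> b*(2*y - 2*x - 1)" using 1 s bpos by (intro mult_left_mono) auto
          have d: "distinct [(0::nat,0::nat),(1::nat,0::nat),(1::nat,1::nat),(1::nat,2::nat)]" by simp
          have mem: "(0,0) \<in> PS a b m t s (b)" "(1,0) \<in> PS a b m t s (b)" "(1,1) \<in> PS a b m t s (b)" "(1,2) \<in> PS a b m t s (b)"
            using 1 s x1 xy y2x y32 y35 unfolding aa bb mm tt by auto
          have "b*s + a*(b) \<le> G + a" using bs M MF1 MF2 unfolding GG aa bb mm tt by (simp add: algebra_simps)
          then show ?thesis by (rule lowI[OF d mem])
        next
          case 2
          have bs: "b*s \<le> b*(y - 1)" using 2 s bpos by (intro mult_left_mono) auto
          have d: "distinct [(0::nat,0::nat),(1::nat,1::nat),(1::nat,2::nat),(1::nat,3::nat)]" by simp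
          have mem: "(0,0) \<in> PS a b m t s (b - t)" "(1,1) \<in> PS a b m t s (b - t)" "(1,2) \<in> PS a b m t s (b - t)" "(1,3) \<in> PS a b m t s (b - t)"
            using 2 s x1 xy y2x y32 y35 unfolding aa bb mm tt by auto
          have "b*s + a*(b - t) \<le> G + a" using bs M MF1 MF2 unfolding GG aa bb mm tt by (simp add: algebra_simps)
          then show ?thesis by (rule lowI[OF d mem])
        next
          case 3
          have bs: "b*s \<le> b*(3*y - 2*x - 1)" using 3 s bpos by (intro mult_left_mono) auto
          have d: "distinct [(0::nat,0::nat),(0::nat,1::nat),(1::nat,2::nat),(1::nat,3::nat)]" by simp
          have mem: "(0,0) \<in> PS a b m t s (b - 2*t)" "(0,1) \<in> PS a b m t s (b - 2*t)" "(1,2) \<in> PS a b m t s (b - 2*t)" "(1,3) \<in> PS a b m t s (b - 2*t)"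
            using 3 s x1 xy y2x y32 y35 unfolding aa bb mm tt by auto
          have "b*s + a*(b - 2*t) \<le> G + a" using bs M MF1 MF2 unfolding GG aa bb mm tt by (simp add: algebra_simps)
          then show ?thesis by (rule lowI[OF d mem])
        next
          case 4
          have bs: "b*s \<le> b*(2*y - 1)" using 4 s bpos by (intro mult_left_mono) auto
          have d: "distinct [(0::nat,0::nat),(0::nat,1::nat),(1::nat,3::nat),(1::nat,4::nat)]" by simp
          have mem: "(0,0) \<in> PS a b m t s (b - 3*t)" "(0,1) \<in> PS a b m t s (b - 3*t)" "(1,3) \<in> PS a b m t s (b - 3*t)" "(1,4) \<in> PS a b m t s (b - 3*t)"
            using 4 s x1 xy y2x y32 y35 unfolding aa bb mm tt by auto
          have "b*s + a*(b - 3*t) \<le> G + a" using bs M MF1 MF2 unfolding GG aa bb mm tt by (simp add: algebra_simps)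
          then show ?thesis by (rule lowI[OF d mem])
        next
          case 5
          have bs: "b*s \<le> b*(a - 1)" using 5 s bpos by (intro mult_left_mono) auto
          have d: "distinct [(0::nat,0::nat),(0::nat,1::nat),(0::nat,2::nat),(1::nat,4::nat)]" by simp
          have mem: "(0,0) \<in> PS a b m t s (b - 4*t)" "(0,1) \<in> PS a b m t s (b - 4*t)" "(0,2) \<in> PS a b m t s (b - 4*t)" "(1,4) \<in> PS a b m t s (b - 4*t)"
            using 5 s x1 xy y2x y32 y35 unfolding aa bb mm tt by auto
          have "b*s + a*(b - 4*t) \<le> G + a" using bs M MF1 MF2 unfolding GG aa bb mm tt by (simp add: algebra_simps)
          then show ?thesis by (rule lowI[OF d mem])
        qed
      qed
    qed
  next
    have G: "G = b*(a - 1) + a*(b - 4*t - 1)" unfolding GG aa bb mm tt by (simp add: algebra_simps)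
    have sub: "PS a b m t (a - 1) (b - 4*t - 1) \<subseteq> {(0,0),(0,1),(0,2)}"
    proof
      fix p assume p: "p \<in> PS a b m t (a - 1) (b - 4*t - 1)"
      obtain j z where pj: "p = (j,z)" by (cases p)
      have adm: "m * int z \<le> (a - 1) + int j * a" and vl: "int j * b - t * int z \<le> b - 4*t - 1" using p pj by auto
      consider "j = 0" | "j = 1" | "j \<ge> 2" by linarith
      then show "p \<in> {(0,0),(0,1),(0,2)}"
      proof cases
        case 1
        have "int z \<le> 2" using zle[OF mpos, of "int z" "(a - 1) + 0*a" "2"] adm 1 x1 xy y2x y32 y35 unfolding aa bb mm tt by (simp add: algebra_simps)
        then have "z = 0 \<or> z = 1 \<or> z = 2" by linarith
        then show ?thesis using vl pj 1 t0 bpos x1 xy unfolding aa bb mm tt by auto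
      next
        case 2
        have "int z \<le> 4" using zle[OF mpos, of "int z" "(a - 1) + 1*a" "4"] adm 2 x1 xy y2x y32 y35 unfolding aa bb mm tt by (simp add: algebra_simps)
        then have "z = 0 \<or> z = 1 \<or> z = 2 \<or> z = 3 \<or> z = 4" by linarith
        then show ?thesis using vl pj 2 t0 bpos x1 xy unfolding aa bb mm tt by auto
      next
        case 3
        have E: "2*(m*b - t*a) - t*(a - 1) - m*(b - 4*t - 1) = 5*(y*y) - 4*(x*y) + 6*(x*x) + 2*y - x" unfolding aa bb mm tt by (simp add: algebra_simps)
        have "2*(m*b - t*a) - t*(a - 1) > m*(b - 4*t - 1)" using E M MF1 MF2 xx xy1 yy1 x1 xy by linarith
        then show ?thesis using jbig[OF mpos t0 cpos adm vl, of 2] 3 by simp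
      qed
    qed
    have s0a: "0 \<le> a - 1" "a - 1 < a" using x1 xy y2x y32 y35 unfolding aa bb mm tt by auto
    show "Up a b m t G" by (rule upI[OF s0a G sub])
  qed
qed




lemma caseF3: "Low 4 11 2 1 65 \<and> Up 4 11 2 1 65"
proof
  show "Low 4 11 2 1 65" unfolding Low_def
  proof (intro allI impI)
    fix s :: int assume s: "0 \<le> s \<and> s < 4"
    show "\<exists>p1 p2 p3 p4 v. distinct [p1,p2,p3,p4] \<and>
     p1 \<in> PS 4 11 2 1 s v \<and> p2 \<in> PS 4 11 2 1 s v \<and> p3 \<in> PS 4 11 2 1 s v \<and> p4 \<in> PS 4 11 2 1 s v
     \<and> 11*s + 4*v \<le> 65 + 4"
    proof (cases "s \<le> 1")
      case True
      have d: "distinct [(0::nat,0::nat),(1,2),(1,1),(1,0)]" by simp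
      have mem: "(0,0) \<in> PS 4 11 2 1 s 11" "(1,2) \<in> PS 4 11 2 1 s 11" "(1,1) \<in> PS 4 11 2 1 s 11"
        "(1,0) \<in> PS 4 11 2 1 s 11" using s True by auto
      show ?thesis by (rule lowI[OF d mem]) (use True in simp)
    next
      case False
      have d: "distinct [(0::nat,1::nat),(0,0),(1,3),(1,2)]" by simp
      have mem: "(0,1) \<in> PS 4 11 2 1 s 9" "(0,0) \<in> PS 4 11 2 1 s 9" "(1,3) \<in> PS 4 11 2 1 s 9"
        "(1,2) \<in> PS 4 11 2 1 s 9" using s False by auto
      show ?thesis by (rule lowI[OF d mem]) (use s in simp)
    qed
  qed
next
  have sub: "PS 4 11 2 1 3 8 \<subseteq> {(0,1),(0,0),(1,3)}"
  proof
    fix p assume p: "p \<in> PS 4 11 2 1 3 8"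
    obtain j z where pj: "p = (j,z)" by (cases p)
    have adm: "2 * int z \<le> 3 + int j * 4" and vl: "int j * 11 - 1 * int z \<le> 8" using p pj by auto
    consider "j = 0" | "j = 1" | "j \<ge> 2" by linarith
    then show "p \<in> {(0,1),(0,0),(1,3)}"
    proof cases
      case 1 then show ?thesis using adm vl pj by auto
    next
      case 2 then show ?thesis using adm vl pj by auto
    next
      case 3
      show ?thesis using jbig[of 2 1 11 4, OF _ _ _ adm vl, of 2] 3 by simp
    qed
  qed
  show "Up 4 11 2 1 65" by (rule upI[OF _ _ _ sub]) auto
qed

lemma lucas_pos: "lucas n > 0"
  by (induction n rule: lucas.induct) auto

lemma frobL:
  fixes i k :: nat and G :: int
  assumes "Low (int (lucas i)) (int (lucas (i+2))) (int (fib (Suc (Suc k)))) (int (fib k)) G"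
    "Up (int (lucas i)) (int (lucas (i+2))) (int (fib (Suc (Suc k)))) (int (fib k)) G"
  shows "p_frobenius 3 [lucas i, lucas (i+2), lucas (i + Suc (Suc k))] = G"
proof (rule frob[OF refl refl lucas_add])
  show "int (lucas i) > 0" using lucas_pos by simp
  show "int (fib (Suc (Suc k))) > 0" using fib_neq_0_nat[of "Suc (Suc k)"] by (simp del: fib.simps)
  show "int (fib k) \<ge> 0" by simp
  show "int (fib (Suc (Suc k))) * int (lucas (i + 2)) - int (fib k) * int (lucas i) > 0"
  proof -
    have h: "0 < int (lucas (i + Suc (Suc k)))" using lucas_pos[of "i + Suc (Suc k)"] by (simp del: lucas.simps)
    then show ?thesis using lucas_add[of i k] by (simp del: lucas.simps fib.simps)
  qed
  show "coprime (int (lucas i)) (int (lucas (i + 2)))" using lucas_coprime2[of i] by (simp only: coprime_int_iff)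
qed (use assms in auto)




lemma xyrep:
  fixes i :: nat assumes i3: "i \<ge> 3"
  defines "x \<equiv> int (fib (i-1))" and "y \<equiv> int (fib i)"
  shows "int (lucas i) = 2*x + y" "int (lucas (i+2)) = 3*x + 4*y"
    "int (fib (i+1)) = x + y" "int (fib (i+2)) = x + 2*y" "int (fib (i+3)) = 2*x + 3*y"
    "int (fib (i+4)) = 3*x + 5*y" "int (fib (i+5)) = 5*x + 8*y"
    "int (fib (i-2)) = y - x" "int (fib (i-3)) = 2*x - y"
    "x \<ge> 1" "x \<le> y" "y \<le> 2*x" "3*x \<le> 2*y"
proof -
  define n where "n = i - 3"
  have n: "i = Suc (Suc (Suc n))" using i3 unfolding n_def by simp
  have l1: "int (lucas i) = int (fib (Suc (Suc n))) + int (fib (Suc (Suc (Suc (Suc n)))))"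
    using lucas_fib[of "Suc (Suc n)"] n by simp
  have l2: "int (lucas (i+2)) = int (fib (Suc (Suc (Suc (Suc n))))) + int (fib (Suc (Suc (Suc (Suc (Suc (Suc n)))))))"
    using lucas_fib[of "Suc (Suc (Suc (Suc n)))"] n by simp
  have mono: "fib n \<le> fib (Suc n)" by (rule fib_Suc_mono)
  have pos: "fib (Suc n) \<ge> 1" using fib_neq_0_nat[of "Suc n"] by simp
  show "int (lucas i) = 2*x + y" using l1 unfolding x_def y_def n by simp
  show "int (lucas (i+2)) = 3*x + 4*y" using l2 unfolding x_def y_def n by simp
  show "int (fib (i+1)) = x + y" "int (fib (i+2)) = x + 2*y" "int (fib (i+3)) = 2*x + 3*y"
    "int (fib (i+4)) = 3*x + 5*y" "int (fib (i+5)) = 5*x + 8*y"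
    "int (fib (i-2)) = y - x" "int (fib (i-3)) = 2*x - y"
    unfolding x_def y_def n by (simp_all add: eval_nat_numeral)
  show "x \<ge> 1" "x \<le> y" "y \<le> 2*x" "3*x \<le> 2*y" unfolding x_def y_def n using mono pos by simp_all
qed




lemma frobL2:
  fixes i kk :: nat and G :: int
  assumes "Low (int (lucas i)) (int (lucas (i+2))) (int (fib (kk+2))) (int (fib kk)) G \<and>
    Up (int (lucas i)) (int (lucas (i+2))) (int (fib (kk+2))) (int (fib kk)) G"
  shows "p_frobenius 3 [lucas i, lucas (i+2), lucas (i + kk + 2)] = G"
    "int (lucas (i + kk + 2)) = int (fib (kk+2)) * int (lucas (i+2)) - int (fib kk) * int (lucas i)"
proof -
  have e: "i + kk + 2 = i + Suc (Suc kk)" "kk + 2 = Suc (Suc kk)" by simp_all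
  show "p_frobenius 3 [lucas i, lucas (i+2), lucas (i + kk + 2)] = G"
    unfolding e(1) by (rule frobL) (use assms in \<open>simp_all only: e(2)\<close>)
  show "int (lucas (i + kk + 2)) = int (fib (kk+2)) * int (lucas (i+2)) - int (fib kk) * int (lucas i)"
    unfolding e by (rule lucas_add)
qed

theorem theorem8:
  fixes i k :: nat
  assumes "i \<ge> 3" and "k \<ge> 3"
  defines "L \<equiv> (\<lambda>m. int (lucas m))" and "F \<equiv> (\<lambda>m. int (fib m))"
  shows
   "(k \<ge> i + 5 \<longrightarrow>
       p_frobenius 3 [lucas i, lucas (i+2), lucas (i+k)]
         = (4 * L i - 1) * L (i+2) - L i)
    \<and> p_frobenius 3 [lucas i, lucas (i+2), lucas (2*i+4)]
         = (4 * F (i-1) - F (i-2) - 1) * L (i+2) + L (2*i+4) - L i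
    \<and> p_frobenius 3 [lucas i, lucas (i+2), lucas (2*i+3)]
         = (4 * F (i+1) - 1) * L (i+2) - L i
    \<and> p_frobenius 3 [lucas i, lucas (i+2), lucas (2*i+2)]
         = (F i + 2 * F (i-3) - 1) * L (i+2) + 2 * L (2*i+2) - L i
    \<and> p_frobenius 3 [lucas i, lucas (i+2), lucas (2*i+1)]
         = (F (i-1) - 1) * L (i+2) + 3 * L (2*i+1) - L i
    \<and> (i \<ge> 4 \<longrightarrow>
       p_frobenius 3 [lucas i, lucas (i+2), lucas (2*i)]
         = (2 * F (i-3) - 1) * L (i+2) + 4 * L (2*i) - L i)
    \<and> p_frobenius 3 [lucas 3, lucas 5, lucas 6] = 3 * L 5 + 2 * L 6 - L 3
    \<and> (let r = (L i - 1) div F k in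
        r \<ge> 3 \<longrightarrow>
        p_frobenius 3 [lucas i, lucas (i+2), lucas (i+k)]
          = (if (L i - r * F k) * L (i+2) \<ge> F (k-2) * L i
             then (L i - r * F k - 1) * L (i+2) + (r + 3) * L (i+k) - L i
             else (F k - 1) * L (i+2) + (r + 2) * L (i+k) - L i))"
proof -
  define x where "x = int (fib (i-1))"
  define y where "y = int (fib i)"
  note X = xyrep[OF assms(1), folded x_def y_def]
  have Ld: "L n = int (lucas n)" for n using assms(3) by simp
  have Fd: "F n = int (fib n)" for n using assms(4) by simp
  have pB: "p_frobenius 3 [lucas i, lucas (i+2), lucas (2*i+4)]
         = (4 * F (i-1) - F (i-2) - 1) * L (i+2) + L (2*i+4) - L i"
  proof -
    have e: "2*i+4 = i + (i+2) + 2" "i+2+2 = i+4" by simp_all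
    have c: "Low (int (lucas i)) (int (lucas (i+2))) (int (fib (i+2+2))) (int (fib (i+2)))
        ((4*(2*x+y) - 1)*(3*x+4*y) - (x+2*y)*(2*x+y) - (2*x+y)) \<and>
      Up (int (lucas i)) (int (lucas (i+2))) (int (fib (i+2+2))) (int (fib (i+2)))
        ((4*(2*x+y) - 1)*(3*x+4*y) - (x+2*y)*(2*x+y) - (2*x+y))"
      unfolding e(2) X(1) X(2) X(6) X(4) by (rule caseB[OF X(10-13)])
    note R = frobL2[OF c]
    show ?thesis unfolding e(1) R(1) Ld Fd R(2) e(2) X(1) X(2) X(4) X(6) X(8) x_def[symmetric]
      by (simp add: algebra_simps)
  qed
  have pC: "p_frobenius 3 [lucas i, lucas (i+2), lucas (2*i+3)]
         = (4 * F (i+1) - 1) * L (i+2) - L i"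
  proof -
    have e: "2*i+3 = i + (i+1) + 2" "i+1+2 = i+3" by simp_all
    have c: "Low (int (lucas i)) (int (lucas (i+2))) (int (fib (i+1+2))) (int (fib (i+1)))
        ((4*(x+y) - 1)*(3*x+4*y) - (2*x+y)) \<and>
      Up (int (lucas i)) (int (lucas (i+2))) (int (fib (i+1+2))) (int (fib (i+1)))
        ((4*(x+y) - 1)*(3*x+4*y) - (2*x+y))"
      unfolding e(2) X(1) X(2) X(5) X(3) by (rule caseC[OF X(10-13)])
    note R = frobL2[OF c]
    show ?thesis unfolding e(1) R(1) Ld Fd X(1) X(2) X(3)
      by (simp add: algebra_simps)
  qed
  have pD: "p_frobenius 3 [lucas i, lucas (i+2), lucas (2*i+2)]
         = (F i + 2 * F (i-3) - 1) * L (i+2) + 2 * L (2*i+2) - L i"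
  proof -
    have e: "2*i+2 = i + i + 2" by simp
    have c: "Low (int (lucas i)) (int (lucas (i+2))) (int (fib (i+2))) (int (fib i))
        ((3*x+4*y)*(3*(2*x+y) - 1) - 2*y*(2*x+y) - (2*x+y)) \<and>
      Up (int (lucas i)) (int (lucas (i+2))) (int (fib (i+2))) (int (fib i))
        ((3*x+4*y)*(3*(2*x+y) - 1) - 2*y*(2*x+y) - (2*x+y))"
      unfolding X(1) X(2) X(4) y_def[symmetric] by (rule caseD[OF X(10-13)])
    note R = frobL2[OF c]
    show ?thesis unfolding e(1) R(1) Ld Fd R(2) X(1) X(2) X(4) X(9) y_def[symmetric]
      by (simp add: algebra_simps)
  qed
  have pE: "p_frobenius 3 [lucas i, lucas (i+2), lucas (2*i+1)]
         = (F (i-1) - 1) * L (i+2) + 3 * L (2*i+1) - L i"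
  proof -
    have e: "2*i+1 = i + (i-1) + 2" "i-1+2 = i+1" using assms(1) by simp_all
    have c: "Low (int (lucas i)) (int (lucas (i+2))) (int (fib (i-1+2))) (int (fib (i-1)))
        ((3*x+4*y)*(4*x + 3*y - 1) - 3*x*(2*x+y) - (2*x+y)) \<and>
      Up (int (lucas i)) (int (lucas (i+2))) (int (fib (i-1+2))) (int (fib (i-1)))
        ((3*x+4*y)*(4*x + 3*y - 1) - 3*x*(2*x+y) - (2*x+y))"
      unfolding e(2) X(1) X(2) X(3) x_def[symmetric] by (rule caseE[OF X(10-13)])
    note R = frobL2[OF c]
    show ?thesis unfolding e(1) R(1) Ld Fd R(2) e(2) X(1) X(2) X(3) x_def[symmetric]
      by (simp add: algebra_simps)
  qed
  have pF: "i \<ge> 4 \<longrightarrow> p_frobenius 3 [lucas i, lucas (i+2), lucas (2*i)]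
         = (2 * F (i-3) - 1) * L (i+2) + 4 * L (2*i) - L i"
  proof
    assume i4: "i \<ge> 4"
    have f1: "fib (i-4) \<le> fib (i-3)" by (rule fib_mono) simp
    have f2: "fib (i-2) = fib (i-3) + fib (i-4)"
    proof -
      have "i - 2 = (i-4) + 2" "i - 3 = (i-4) + 1" using i4 by simp_all
      then show ?thesis using fib_plus_2[of "i-4"] by simp
    qed
    have y35: "3*y \<le> 5*x" using f1 f2 X(8) X(9) by simp
    have e: "2*i = i + (i-2) + 2" "i-2+2 = i" using i4 by simp_all
    have c: "Low (int (lucas i)) (int (lucas (i+2))) (int (fib (i-2+2))) (int (fib (i-2)))
        ((3*x+4*y)*(2*(2*x+y) - 1) - 4*(y-x)*(2*x+y) - (2*x+y)) \<and>
      Up (int (lucas i)) (int (lucas (i+2))) (int (fib (i-2+2))) (int (fib (i-2)))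
        ((3*x+4*y)*(2*(2*x+y) - 1) - 4*(y-x)*(2*x+y) - (2*x+y))"
      unfolding e(2) X(1) X(2) X(8) y_def[symmetric] by (rule caseF[OF X(10-13) y35])
    note R = frobL2[OF c]
    show "p_frobenius 3 [lucas i, lucas (i+2), lucas (2*i)]
         = (2 * F (i-3) - 1) * L (i+2) + 4 * L (2*i) - L i"
      unfolding e(1) R(1) Ld Fd R(2) e(2) X(1) X(2) X(8) X(9) y_def[symmetric]
      by (simp add: algebra_simps)
  qed
  have pF3: "p_frobenius 3 [lucas 3, lucas 5, lucas 6] = 3 * L 5 + 2 * L 6 - L 3"
  proof -
    have v: "int (lucas 3) = 4" "int (lucas (3+2)) = 11" "int (fib (1+2)) = 2" "int (fib 1) = 1"
      by (simp_all add: eval_nat_numeral)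
    have c: "Low (int (lucas 3)) (int (lucas (3+2))) (int (fib (1+2))) (int (fib 1)) 65 \<and>
       Up (int (lucas 3)) (int (lucas (3+2))) (int (fib (1+2))) (int (fib 1)) 65"
      unfolding v by (rule caseF3)
    note R = frobL2[OF c]
    have e: "(3::nat)+2 = 5" "(3::nat) + 1 + 2 = 6" by simp_all
    have "p_frobenius 3 [lucas 3, lucas 5, lucas 6] = 65" using R(1) unfolding e .
    then show ?thesis unfolding Ld by (simp add: eval_nat_numeral)
  qed
  have m2t: "int (fib k) \<ge> 2 * int (fib (k-2))"
  proof -
    have h: "fib (k-2+2) = fib (k-2+1) + fib (k-2)" by (rule fib_plus_2)
    have "k-2+2 = k" using assms(2) by simp
    then have "fib k = fib (k-2+1) + fib (k-2)" using h by simp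
    moreover have "fib (k-2) \<le> fib (k-2+1)" using fib_Suc_mono[of "k-2"] by simp
    ultimately show ?thesis by simp
  qed
  have ek: "i + k = i + (k-2) + 2" "k-2+2 = k" using assms(2) by simp_all
  have pA: "k \<ge> i + 5 \<longrightarrow>
       p_frobenius 3 [lucas i, lucas (i+2), lucas (i+k)]
         = (4 * L i - 1) * L (i+2) - L i"
  proof
    assume ka: "k \<ge> i + 5"
    have a1: "int (lucas i) \<ge> 1" using X(1) X(10) X(11) by simp
    have "fib (i+5) \<le> fib k" using ka by (intro fib_mono)
    then have m4a: "int (fib k) \<ge> 4 * int (lucas i)" using X(1) X(7) X(13) X(10) by simp
    have b5a: "2 * int (lucas (i+2)) \<ge> 5 * int (lucas i)" using X(1) X(2) X(13) X(10) by simp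
    have c: "Low (int (lucas i)) (int (lucas (i+2))) (int (fib (k-2+2))) (int (fib (k-2)))
        ((4*int (lucas i) - 1)*int (lucas (i+2)) - int (lucas i)) \<and>
      Up (int (lucas i)) (int (lucas (i+2))) (int (fib (k-2+2))) (int (fib (k-2)))
        ((4*int (lucas i) - 1)*int (lucas (i+2)) - int (lucas i))"
      unfolding ek(2) by (rule caseA[OF a1 m4a m2t b5a]) simp
    note R = frobL2[OF c]
    show "p_frobenius 3 [lucas i, lucas (i+2), lucas (i+k)] = (4 * L i - 1) * L (i+2) - L i"
      unfolding ek(1) R(1) Ld ..
  qed
  have pG: "let r = (L i - 1) div F k in
        r \<ge> 3 \<longrightarrow>
        p_frobenius 3 [lucas i, lucas (i+2), lucas (i+k)]
          = (if (L i - r * F k) * L (i+2) \<ge> F (k-2) * L i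
             then (L i - r * F k - 1) * L (i+2) + (r + 3) * L (i+k) - L i
             else (F k - 1) * L (i+2) + (r + 2) * L (i+k) - L i)"
    unfolding Let_def
  proof
    define a where "a = int (lucas i)"
    define b where "b = int (lucas (i+2))"
    define m where "m = int (fib k)"
    define t where "t = int (fib (k-2))"
    define r where "r = (a - 1) div m"
    assume r3': "(L i - 1) div F k \<ge> 3"
    then have r3: "r \<ge> 3" unfolding r_def a_def m_def Ld Fd .
    have mpos: "m > 0" unfolding m_def using fib_neq_0_nat[of k] assms(2) by simp
    have b2a: "b \<ge> 2*a + 1" unfolding a_def b_def using X(1) X(2) X(10) X(11) by simp
    have m2t': "m \<ge> 2*t" unfolding m_def t_def using m2t .
    have t1: "t \<ge> 1" unfolding t_def using fib_neq_0_nat[of "k-2"] assms(2) by simp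
    have d1: "m * r \<le> a - 1" "a - 1 < m * (r + 1)" unfolding r_def using divb[OF mpos, of "a-1"] by simp_all
    have ra: "r*m + 1 \<le> a" using d1 by (simp add: mult.commute)
    have ar: "a \<le> (r+1)*m" using d1 by (simp add: mult.commute)
    have c: "Low (int (lucas i)) (int (lucas (i+2))) (int (fib (k-2+2))) (int (fib (k-2)))
        (max ((a - r*m - 1)*b + (r+3)*(m*b - t*a) - a) ((m-1)*b + (r+2)*(m*b - t*a) - a)) \<and>
      Up (int (lucas i)) (int (lucas (i+2))) (int (fib (k-2+2))) (int (fib (k-2)))
        (max ((a - r*m - 1)*b + (r+3)*(m*b - t*a) - a) ((m-1)*b + (r+2)*(m*b - t*a) - a))"
      unfolding ek(2) a_def[symmetric] b_def[symmetric] m_def[symmetric] t_def[symmetric]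
      by (rule caseG[OF b2a m2t' t1 r3 ra ar])
    note R = frobL2[OF c]
    have lk: "int (lucas (i+k)) = m*b - t*a" unfolding ek(1) R(2) ek(2) a_def b_def m_def t_def ..
    have diff: "((a - r*m - 1)*b + (r+3)*(m*b - t*a) - a) - ((m-1)*b + (r+2)*(m*b - t*a) - a) = (a - r*m)*b - t*a"
      by (simp add: algebra_simps)
    show "p_frobenius 3 [lucas i, lucas (i+2), lucas (i+k)]
          = (if (L i - (L i - 1) div F k * F k) * L (i+2) \<ge> F (k-2) * L i
             then (L i - (L i - 1) div F k * F k - 1) * L (i+2) + ((L i - 1) div F k + 3) * L (i+k) - L i
             else (F k - 1) * L (i+2) + ((L i - 1) div F k + 2) * L (i+k) - L i)"
      unfolding ek(1)[symmetric] R(1)[unfolded ek(1)[symmetric]] Ld Fd lk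
      unfolding a_def[symmetric] b_def[symmetric] m_def[symmetric] t_def[symmetric] r_def[symmetric]
      using diff by (simp add: max_def algebra_simps)
  qed
  show ?thesis using pA pB pC pD pE pF pF3 pG by blast
qed


end
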